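(* Let $G$ be a finite group, let $S$ be an irreducible $\mathbb{R}G$-module of odd dimension such that $(G,S)$ has the eigenvalue one property, and let $V$ be the direct sum of an odd number of copies of $S$. Then $(G,V)$ has the eigenvalue one property.
   Context: For a finite group $G$ and a finite-dimensional $\mathbb{R}G$-module $W$ affording $\rho\colon G\to\mathrm{GL}(W)$, the pair $(G,W)$ has the eigenvalue one property if for every $n\in N_{\mathrm{GL}(W)}(\rho(G))$ of finite order there is $g\in G$ such that $\rho(g)n$ has eigenvalue $1$. *)

theory Defs
  imports "HOL-Algebra.Group" "Jordan_Normal_Form.Char_Poly"
begin

definition real_rep :: "('g, 'b) monoid_scheme \<Rightarrow> nat \<Rightarrow> ('g \<Rightarrow> real mat) \<Rightarrow> bool" where
  "real_rep G d \<rho> \<longleftrightarrow>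
     (\<forall>g \<in> carrier G. \<rho> g \<in> carrier_mat d d) \<and>
     \<rho> \<one>\<^bsub>G\<^esub> = 1\<^sub>m d \<and>
     (\<forall>g \<in> carrier G. \<forall>h \<in> carrier G. \<rho> (g \<otimes>\<^bsub>G\<^esub> h) = \<rho> g * \<rho> h)"

definition real_subspace :: "nat \<Rightarrow> real vec set \<Rightarrow> bool" where
  "real_subspace d W \<longleftrightarrow> W \<subseteq> carrier_vec d \<and> 0\<^sub>v d \<in> W \<and>
     (\<forall>v \<in> W. \<forall>w \<in> W. v + w \<in> W) \<and> (\<forall>c. \<forall>v \<in> W. c \<cdot>\<^sub>v v \<in> W)"

definition irreducible_rep :: "('g, 'b) monoid_scheme \<Rightarrow> nat \<Rightarrow> ('g \<Rightarrow> real mat) \<Rightarrow> bool" where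
  "irreducible_rep G d \<rho> \<longleftrightarrow> real_rep G d \<rho> \<and> d > 0 \<and>
     (\<forall>W. real_subspace d W \<and> (\<forall>g \<in> carrier G. \<forall>w \<in> W. \<rho> g *\<^sub>v w \<in> W)
        \<longrightarrow> W = {0\<^sub>v d} \<or> W = carrier_vec d)"

definition in_normalizer :: "('g, 'b) monoid_scheme \<Rightarrow> nat \<Rightarrow> ('g \<Rightarrow> real mat) \<Rightarrow> real mat \<Rightarrow> bool" where
  "in_normalizer G d \<rho> N \<longleftrightarrow> N \<in> carrier_mat d d \<and>
     (\<exists>M \<in> carrier_mat d d. N * M = 1\<^sub>m d \<and> M * N = 1\<^sub>m d \<and>
        (\<lambda>g. N * \<rho> g * M) ` carrier G = \<rho> ` carrier G)"

definition finite_order_mat :: "nat \<Rightarrow> real mat \<Rightarrow> bool" where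
  "finite_order_mat d N \<longleftrightarrow> (\<exists>k > 0. N ^\<^sub>m k = 1\<^sub>m d)"

definition eigenvalue_one_property :: "('g, 'b) monoid_scheme \<Rightarrow> nat \<Rightarrow> ('g \<Rightarrow> real mat) \<Rightarrow> bool" where
  "eigenvalue_one_property G d \<rho> \<longleftrightarrow>
     (\<forall>N. in_normalizer G d \<rho> N \<and> finite_order_mat d N \<longrightarrow>
        (\<exists>g \<in> carrier G. eigenvalue (\<rho> g * N) 1))"

definition rep_copies :: "nat \<Rightarrow> ('g \<Rightarrow> real mat) \<Rightarrow> 'g \<Rightarrow> real mat" where
  "rep_copies k \<rho> = (\<lambda>g. diag_block_mat (replicate k (\<rho> g)))"

end

theory Submission
  imports Defs
begin

lemma sum_split_kd:
  fixes f :: "nat \<Rightarrow> 'a::comm_monoid_add"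
  shows "(\<Sum>p\<in>{0..<k*d}. f p) = (\<Sum>l\<in>{0..<k}. \<Sum>u\<in>{0..<d}. f (l*d+u))"
proof (induction k)
  case 0 then show ?case by simp
next
  case (Suc k)
  have "{0..<Suc k * d} = {0..<k*d} \<union> {k*d..<k*d+d}" by auto
  then have "(\<Sum>p\<in>{0..<Suc k*d}. f p) = (\<Sum>p\<in>{0..<k*d}. f p) + (\<Sum>p\<in>{k*d..<k*d+d}. f p)"
    by (simp add: sum.union_disjoint ivl_disj_int)
  also have "(\<Sum>p\<in>{k*d..<k*d+d}. f p) = (\<Sum>u\<in>{0..<d}. f (u+k*d))"
    using sum.shift_bounds_nat_ivl[of f 0 "k*d" d] by (simp add: add.commute)
  also have "\<dots> = (\<Sum>u\<in>{0..<d}. f (k*d+u))" by (simp add: add.commute)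
  finally show ?case using Suc by simp
qed

definition kron :: "nat \<Rightarrow> nat \<Rightarrow> real mat \<Rightarrow> real mat \<Rightarrow> real mat" where
  "kron k d A X = mat (k*d) (k*d) (\<lambda>(p,q). A$$(p div d, q div d) * X$$(p mod d, q mod d))"

definition vt :: "nat \<Rightarrow> nat \<Rightarrow> real vec \<Rightarrow> real vec \<Rightarrow> real vec" where
  "vt k d w v = vec (k*d) (\<lambda>p. w$(p div d) * v$(p mod d))"

lemma kron_carrier[simp]: "kron k d A X \<in> carrier_mat (k*d) (k*d)"
  by (simp add: kron_def)

lemma kron_dims[simp]: "dim_row (kron k d A X) = k*d" "dim_col (kron k d A X) = k*d"
  by (simp_all add: kron_def)

lemma kron_index[simp]: "p < k*d \<Longrightarrow> q < k*d \<Longrightarrow> kron k d A X $$ (p,q) = A$$(p div d, q div d) * X$$(p mod d, q mod d)"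
  by (simp add: kron_def)

lemma div_lt: "p < k*(d::nat) \<Longrightarrow> p div d < k"
  by (simp add: less_mult_imp_div_less)
lemma mod_lt: "p < k*(d::nat) \<Longrightarrow> p mod d < d"
  by (metis mod_less_divisor mult_0_right neq0_conv not_less0)
lemma idx_lt: "l < k \<Longrightarrow> u < (d::nat) \<Longrightarrow> l*d+u < k*d"
proof -
  assume a: "l < k" "u < d"
  have "l*d+u < l*d+d" using a by simp
  also have "\<dots> = (l+1)*d" by simp
  also have "\<dots> \<le> k*d" using a by (intro mult_le_mono1) simp
  finally show ?thesis .
qed

lemma idx_div[simp]: "u < (d::nat) \<Longrightarrow> (l*d+u) div d = l"
  by simp
lemma idx_mod[simp]: "u < (d::nat) \<Longrightarrow> (l*d+u) mod d = u"
  by simp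

lemma kron_mult:
  assumes A: "A \<in> carrier_mat k k" and B: "B \<in> carrier_mat k k"
    and X: "X \<in> carrier_mat d d" and Y: "Y \<in> carrier_mat d d"
  shows "kron k d A X * kron k d B Y = kron k d (A*B) (X*Y)"
proof (rule eq_matI)
  fix p q assume p: "p < dim_row (kron k d (A*B) (X*Y))" and q: "q < dim_col (kron k d (A*B) (X*Y))"
  then have p: "p < k*d" and q: "q < k*d" by auto
  have "(kron k d A X * kron k d B Y) $$ (p,q) = (\<Sum>t\<in>{0..<k*d}. kron k d A X $$ (p,t) * kron k d B Y $$ (t,q))"
    using p q by (simp add: scalar_prod_def)
  also have "\<dots> = (\<Sum>l\<in>{0..<k}. \<Sum>u\<in>{0..<d}. kron k d A X $$ (p,l*d+u) * kron k d B Y $$ (l*d+u,q))"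
    by (rule sum_split_kd)
  also have "\<dots> = (\<Sum>l\<in>{0..<k}. \<Sum>u\<in>{0..<d}. (A$$(p div d, l) * B$$(l, q div d)) * (X$$(p mod d, u) * Y$$(u, q mod d)))"
    by (intro sum.cong refl) (simp add: p q idx_lt)
  also have "\<dots> = (\<Sum>l\<in>{0..<k}. A$$(p div d, l) * B$$(l, q div d)) * (\<Sum>u\<in>{0..<d}. X$$(p mod d, u) * Y$$(u, q mod d))"
    by (simp add: sum_product)
  also have "\<dots> = kron k d (A*B) (X*Y) $$ (p,q)"
    using p q A B X Y div_lt[OF p] div_lt[OF q] mod_lt[OF p] mod_lt[OF q]
    by (simp add: scalar_prod_def row_def col_def)
  finally show "(kron k d A X * kron k d B Y) $$ (p,q) = kron k d (A*B) (X*Y) $$ (p,q)" .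
qed auto

lemma kron_one: "kron k d (1\<^sub>m k) (1\<^sub>m d) = 1\<^sub>m (k*d)"
proof (rule eq_matI)
  fix p q assume "p < dim_row (1\<^sub>m (k*d))" "q < dim_col (1\<^sub>m (k*d))"
  then have p: "p < k*d" and q: "q < k*d" by auto
  have "(p div d = q div d \<and> p mod d = q mod d) \<longleftrightarrow> p = q"
    by (metis div_mult_mod_eq)
  then show "kron k d (1\<^sub>m k) (1\<^sub>m d) $$ (p, q) = 1\<^sub>m (k*d) $$ (p, q)"
    using p q div_lt[OF p] div_lt[OF q] mod_lt[OF p] mod_lt[OF q] by auto
qed auto

lemma kron_pow:
  assumes A: "A \<in> carrier_mat k k" and X: "X \<in> carrier_mat d d"
  shows "(kron k d A X) ^\<^sub>m n = kron k d (A ^\<^sub>m n) (X ^\<^sub>m n)"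
proof (induction n)
  case 0 then show ?case using A X by (simp add: kron_one)
next
  case (Suc n) then show ?case using A X by (simp add: kron_mult)
qed

lemma vt_dim[simp]: "dim_vec (vt k d w v) = k*d" "vt k d w v \<in> carrier_vec (k*d)"
  by (auto simp: vt_def)

lemma vt_index[simp]: "p < k*d \<Longrightarrow> vt k d w v $ p = w$(p div d) * v$(p mod d)"
  by (simp add: vt_def)

lemma kron_mult_vec:
  assumes A: "A \<in> carrier_mat k k" and X: "X \<in> carrier_mat d d"
    and w: "w \<in> carrier_vec k" and v: "v \<in> carrier_vec d"
  shows "kron k d A X *\<^sub>v vt k d w v = vt k d (A *\<^sub>v w) (X *\<^sub>v v)"
proof (rule eq_vecI)
  fix p assume "p < dim_vec (vt k d (A *\<^sub>v w) (X *\<^sub>v v))"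
  then have p: "p < k*d" by simp
  have "(kron k d A X *\<^sub>v vt k d w v) $ p = (\<Sum>t\<in>{0..<k*d}. kron k d A X $$ (p,t) * vt k d w v $ t)"
    using p by (simp add: scalar_prod_def row_def)
  also have "\<dots> = (\<Sum>l\<in>{0..<k}. \<Sum>u\<in>{0..<d}. kron k d A X $$ (p,l*d+u) * vt k d w v $ (l*d+u))"
    by (rule sum_split_kd)
  also have "\<dots> = (\<Sum>l\<in>{0..<k}. \<Sum>u\<in>{0..<d}. (A$$(p div d, l) * w$l) * (X$$(p mod d, u) * v$u))"
    by (intro sum.cong refl) (simp add: p idx_lt)
  also have "\<dots> = (\<Sum>l\<in>{0..<k}. A$$(p div d, l) * w$l) * (\<Sum>u\<in>{0..<d}. X$$(p mod d, u) * v$u)"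
    by (simp add: sum_product)
  also have "\<dots> = vt k d (A *\<^sub>v w) (X *\<^sub>v v) $ p"
    using p A X w v div_lt[OF p] mod_lt[OF p]
    by (simp add: scalar_prod_def row_def)
  finally show "(kron k d A X *\<^sub>v vt k d w v) $ p = vt k d (A *\<^sub>v w) (X *\<^sub>v v) $ p" .
qed auto

lemma vt_nonzero:
  assumes w: "w \<in> carrier_vec k" "w \<noteq> 0\<^sub>v k" and v: "v \<in> carrier_vec d" "v \<noteq> 0\<^sub>v d"
  shows "vt k d w v \<noteq> 0\<^sub>v (k*d)"
proof -
  obtain i where i: "i < k" "w$i \<noteq> 0" using w by (metis eq_vecI index_zero_vec(1) carrier_vecD index_zero_vec(2))
  obtain j where j: "j < d" "v$j \<noteq> 0" using v by (metis eq_vecI index_zero_vec(1) carrier_vecD index_zero_vec(2))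
  have "vt k d w v $ (i*d+j) \<noteq> 0" using i j idx_lt[OF i(1) j(1)] by simp
  then show ?thesis using idx_lt[OF i(1) j(1)] by (metis index_zero_vec(1))
qed

lemma rep_kron:
  assumes B: "B \<in> carrier_mat d d"
  shows "diag_block_mat (replicate k B) = kron k d (1\<^sub>m k) B"
proof (induction k)
  case 0 then show ?case by (auto simp: kron_def)
next
  case (Suc k)
  have "diag_block_mat (replicate (Suc k) B) = four_block_mat B (0\<^sub>m d (k*d)) (0\<^sub>m (k*d) d) (kron k d (1\<^sub>m k) B)"
    using Suc B by (simp add: Let_def)
  also have "\<dots> = kron (Suc k) d (1\<^sub>m (Suc k)) B"
  proof (rule eq_matI)
    fix p q assume "p < dim_row (kron (Suc k) d (1\<^sub>m (Suc k)) B)" "q < dim_col (kron (Suc k) d (1\<^sub>m (Suc k)) B)"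
    then have p: "p < d + k*d" and q: "q < d + k*d" by auto
    have p': "p < Suc k * d" and q': "q < Suc k * d" using p q by auto
    show "four_block_mat B (0\<^sub>m d (k*d)) (0\<^sub>m (k*d) d) (kron k d (1\<^sub>m k) B) $$ (p,q) = kron (Suc k) d (1\<^sub>m (Suc k)) B $$ (p,q)"
    proof (cases "p < d")
      case True
      show ?thesis
      proof (cases "q < d")
        case True
        then show ?thesis using \<open>p < d\<close> p q B p' q' by simp
      next
        case False
        then have "q div d \<noteq> 0" using \<open>p < d\<close> by (auto simp: div_eq_0_iff)
        then show ?thesis using \<open>p < d\<close> \<open>\<not> q < d\<close> p q B p' q' div_lt[OF q'] by simp
      qed
    next
      case False
      have d0: "0 < d" using p by (cases d) auto
      from False d0 have pd: "p - d < k*d" "(p - d) div d = p div d - 1" "(p-d) mod d = p mod d" "p div d \<noteq> 0"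
        using p by (auto simp: le_div_geq le_mod_geq div_eq_0_iff)
      show ?thesis
      proof (cases "q < d")
        case True
        then show ?thesis using False p q B p' q' pd div_lt[OF p'] by simp
      next
        case False
        then have qd: "q - d < k*d" "(q - d) div d = q div d - 1" "(q-d) mod d = q mod d" "q div d \<noteq> 0"
          using q d0 by (auto simp: le_div_geq le_mod_geq div_eq_0_iff)
        have "(p div d - 1 = q div d - 1) \<longleftrightarrow> p div d = q div d" using pd(4) qd(4) by auto
        then show ?thesis using \<open>\<not> p < d\<close> False p q B p' q' pd qd div_lt[OF p'] div_lt[OF q'] div_lt[OF pd(1)] div_lt[OF qd(1)]
          by simp
      qed
    qed
  qed (use B in auto)
  finally show ?case .
qed

definition blk :: "nat \<Rightarrow> real mat \<Rightarrow> nat \<Rightarrow> nat \<Rightarrow> real mat" where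
  "blk d N i j = mat d d (\<lambda>(r,s). N$$(i*d+r, j*d+s))"

lemma blk_carrier[simp]: "blk d N i j \<in> carrier_mat d d" by (simp add: blk_def)
lemma blk_dims[simp]: "dim_row (blk d N i j) = d" "dim_col (blk d N i j) = d" by (simp_all add: blk_def)
lemma blk_index[simp]: "r < d \<Longrightarrow> s < d \<Longrightarrow> blk d N i j $$ (r,s) = N$$(i*d+r, j*d+s)"
  by (simp add: blk_def)

lemma blk_right:
  assumes N: "N \<in> carrier_mat (k*d) (k*d)" and B: "B \<in> carrier_mat d d" and i: "i < k" and j: "j < k"
  shows "blk d (N * kron k d (1\<^sub>m k) B) i j = blk d N i j * B"
proof (rule eq_matI)
  fix r s assume "r < dim_row (blk d N i j * B)" "s < dim_col (blk d N i j * B)"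
  then have r: "r < d" and s: "s < d" using B by auto
  have ir: "i*d+r < k*d" and js: "j*d+s < k*d" using idx_lt i j r s by auto
  have "blk d (N * kron k d (1\<^sub>m k) B) i j $$ (r,s) = (\<Sum>t\<in>{0..<k*d}. N $$ (i*d+r,t) * kron k d (1\<^sub>m k) B $$ (t,j*d+s))"
    using r s ir js N by (simp add: scalar_prod_def row_def col_def)
  also have "\<dots> = (\<Sum>l\<in>{0..<k}. \<Sum>u\<in>{0..<d}. N $$ (i*d+r,l*d+u) * kron k d (1\<^sub>m k) B $$ (l*d+u,j*d+s))"
    by (rule sum_split_kd)
  also have "\<dots> = (\<Sum>l\<in>{0..<k}. if l = j then (\<Sum>u\<in>{0..<d}. N $$ (i*d+r,l*d+u) * B$$(u,s)) else 0)"
    by (intro sum.cong refl) (simp add: idx_lt js s j)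
  also have "\<dots> = (\<Sum>u\<in>{0..<d}. N $$ (i*d+r,j*d+u) * B$$(u,s))"
    using j by simp
  also have "\<dots> = (blk d N i j * B) $$ (r,s)"
    using r s B by (simp add: scalar_prod_def row_def col_def)
  finally show "blk d (N * kron k d (1\<^sub>m k) B) i j $$ (r,s) = (blk d N i j * B) $$ (r,s)" .
qed (use B in auto)

lemma blk_left:
  assumes N: "N \<in> carrier_mat (k*d) (k*d)" and B: "B \<in> carrier_mat d d" and i: "i < k" and j: "j < k"
  shows "blk d (kron k d (1\<^sub>m k) B * N) i j = B * blk d N i j"
proof (rule eq_matI)
  fix r s assume "r < dim_row (B * blk d N i j)" "s < dim_col (B * blk d N i j)"
  then have r: "r < d" and s: "s < d" using B by auto
  have ir: "i*d+r < k*d" and js: "j*d+s < k*d" using idx_lt i j r s by auto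
  have "blk d (kron k d (1\<^sub>m k) B * N) i j $$ (r,s) = (\<Sum>t\<in>{0..<k*d}. kron k d (1\<^sub>m k) B $$ (i*d+r,t) * N $$ (t,j*d+s))"
    using r s ir js N by (simp add: scalar_prod_def row_def col_def)
  also have "\<dots> = (\<Sum>l\<in>{0..<k}. \<Sum>u\<in>{0..<d}. kron k d (1\<^sub>m k) B $$ (i*d+r,l*d+u) * N $$ (l*d+u,j*d+s))"
    by (rule sum_split_kd)
  also have "\<dots> = (\<Sum>l\<in>{0..<k}. if i = l then (\<Sum>u\<in>{0..<d}. B$$(r,u) * N $$ (l*d+u,j*d+s)) else 0)"
    by (intro sum.cong refl) (simp add: idx_lt ir r i)
  also have "\<dots> = (\<Sum>u\<in>{0..<d}. B$$(r,u) * N $$ (i*d+u,j*d+s))"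
    using i by simp
  also have "\<dots> = (B * blk d N i j) $$ (r,s)"
    using r s B by (simp add: scalar_prod_def row_def col_def)
  finally show "blk d (kron k d (1\<^sub>m k) B * N) i j $$ (r,s) = (B * blk d N i j) $$ (r,s)" .
qed (use B in auto)

lemma odd_real_root:
  fixes p :: "real poly"
  assumes odd: "odd (degree p)" and lc: "lead_coeff p = 1"
  shows "\<exists>x. poly p x = 0"
proof -
  let ?r = "[:0, -1:: real:]"
  define q where "q = - pcompose p ?r"
  have "lead_coeff (pcompose p ?r) = lead_coeff p * lead_coeff ?r ^ degree p"
    by (rule lead_coeff_comp) simp
  also have "\<dots> = -1" using lc odd by simp
  finally have lq: "lead_coeff q = 1" unfolding q_def by simp
  have pq: "poly q x = - poly p (-x)" for x unfolding q_def by (simp add: poly_pcompose)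
  obtain n1 where n1: "\<forall>x\<ge>n1. poly p x \<ge> 1" using poly_pinfty_gt_lc[of p] lc by auto
  obtain n2 where n2: "\<forall>x\<ge>n2. poly q x \<ge> 1" using poly_pinfty_gt_lc[of q] lq by auto
  define x where "x = max (max n1 n2) 1"
  have a: "poly p x \<ge> 1" using n1 x_def by auto
  have "poly q x \<ge> 1" using n2 x_def by auto
  then have b: "poly p (-x) \<le> -1" using pq[of x] by auto
  have "poly p (-x) * poly p x < 0" using a b by (simp add: mult_neg_pos)
  moreover have "-x < x" using x_def by auto
  ultimately show ?thesis using poly_IVT[of "-x" x p] by auto
qed

lemma odd_real_eigenvalue:
  assumes A: "(A :: real mat) \<in> carrier_mat n n" and n: "odd n"
  shows "\<exists>l. eigenvalue A l"
proof -
  have "degree (char_poly A) = n" "coeff (char_poly A) n = 1" using degree_monic_char_poly[OF A] by auto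
  then obtain x where "poly (char_poly A) x = 0" using odd_real_root[of "char_poly A"] n by auto
  then show ?thesis using eigenvalue_root_char_poly[OF A] by auto
qed

lemma mat_inverse_exists:
  assumes A: "(A :: real mat) \<in> carrier_mat n n" and d: "det A \<noteq> 0"
  shows "\<exists>M \<in> carrier_mat n n. A * M = 1\<^sub>m n \<and> M * A = 1\<^sub>m n"
  using det_non_zero_imp_unit[OF A d, of undefined] A
  unfolding Units_def by (auto simp: ring_mat_simps)

lemma schur_zero:
  assumes irr: "irreducible_rep G d \<rho>" and X: "X \<in> carrier_mat d d"
    and int: "\<forall>g\<in>carrier G. \<exists>h\<in>carrier G. X * \<rho> g = \<rho> h * X"
    and v: "v \<in> carrier_vec d" "v \<noteq> 0\<^sub>v d" "X *\<^sub>v v = 0\<^sub>v d"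
  shows "X = 0\<^sub>m d d"
proof -
  have rep: "\<forall>g\<in>carrier G. \<rho> g \<in> carrier_mat d d" using irr unfolding irreducible_rep_def real_rep_def by auto
  define W where "W = {w \<in> carrier_vec d. X *\<^sub>v w = 0\<^sub>v d}"
  have sub: "real_subspace d W"
    unfolding real_subspace_def W_def using X
    by (auto simp: mult_add_distrib_mat_vec mult_mat_vec)
  have inv: "\<forall>g\<in>carrier G. \<forall>w\<in>W. \<rho> g *\<^sub>v w \<in> W"
  proof (intro ballI)
    fix g w assume g: "g \<in> carrier G" and w: "w \<in> W"
    obtain h where h: "h \<in> carrier G" "X * \<rho> g = \<rho> h * X" using int g by auto
    have wc: "w \<in> carrier_vec d" "X *\<^sub>v w = 0\<^sub>v d" using w W_def by auto
    have rg: "\<rho> g \<in> carrier_mat d d" using rep g by auto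
    have rh: "\<rho> h \<in> carrier_mat d d" using rep h by auto
    have e1: "X *\<^sub>v (\<rho> g *\<^sub>v w) = (X * \<rho> g) *\<^sub>v w" using assoc_mult_mat_vec[OF X rg wc(1)] by simp
    have e2: "(\<rho> h * X) *\<^sub>v w = \<rho> h *\<^sub>v (X *\<^sub>v w)" using assoc_mult_mat_vec[OF rh X wc(1)] by simp
    have "X *\<^sub>v (\<rho> g *\<^sub>v w) = 0\<^sub>v d" using e1 e2 h(2) wc(2) rh by (auto intro!: eq_vecI simp: scalar_prod_def)
    then show "\<rho> g *\<^sub>v w \<in> W" unfolding W_def using rg wc by simp
  qed
  have "W = {0\<^sub>v d} \<or> W = carrier_vec d" using irr sub inv unfolding irreducible_rep_def by blast
  moreover have "v \<in> W" using v W_def by auto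
  ultimately have W: "W = carrier_vec d" using v by auto
  show ?thesis
  proof (rule eq_matI)
    fix r s assume r: "r < dim_row (0\<^sub>m d d :: real mat)" and s: "s < dim_col (0\<^sub>m d d :: real mat)"
    have "unit_vec d s \<in> W" using W by simp
    then have "X *\<^sub>v unit_vec d s = 0\<^sub>v d" unfolding W_def by simp
    then have "(X *\<^sub>v unit_vec d s) $ r = 0" using r by simp
    then show "X $$ (r,s) = 0\<^sub>m d d $$ (r,s)" using r s X by (simp add: scalar_prod_def row_def if_distrib[of "\<lambda>x. X $$ (r, _) * x"] cong: if_cong)
  qed (use X in auto)
qed

lemma smult_mat_vec_assoc:
  assumes A: "(A :: real mat) \<in> carrier_mat n n" and v: "v \<in> carrier_vec n"
  shows "(c \<cdot>\<^sub>m A) *\<^sub>v v = c \<cdot>\<^sub>v (A *\<^sub>v v)"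
  by (rule eq_vecI) (use A v in \<open>auto simp: scalar_prod_def sum_distrib_left algebra_simps\<close>)

lemma smult_pow:
  assumes A: "(A :: real mat) \<in> carrier_mat n n"
  shows "(c \<cdot>\<^sub>m A) ^\<^sub>m i = c^i \<cdot>\<^sub>m (A ^\<^sub>m i)"
proof (induction i)
  case 0 then show ?case using A by (auto intro!: eq_matI)
next
  case (Suc i)
  have "(c \<cdot>\<^sub>m A) ^\<^sub>m Suc i = (c^i \<cdot>\<^sub>m (A ^\<^sub>m i)) * (c \<cdot>\<^sub>m A)" using Suc by simp
  also have "\<dots> = c \<cdot>\<^sub>m (c^i \<cdot>\<^sub>m (A ^\<^sub>m i * A))"
    using A by (simp add: mult_smult_assoc_mat[of _ n n _ n] mult_smult_distrib[of _ n n _ n])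
  also have "\<dots> = c^Suc i \<cdot>\<^sub>m (A ^\<^sub>m Suc i)" by (auto intro!: eq_matI)
  finally show ?case .
qed

lemma image_conj_eq:
  assumes fin: "finite S" and S: "S \<subseteq> carrier_mat d d"
    and X: "(X :: real mat) \<in> carrier_mat d d" and M: "M \<in> carrier_mat d d" and MX: "M * X = 1\<^sub>m d"
    and sub: "(\<lambda>Y. X * Y * M) ` S \<subseteq> S"
  shows "(\<lambda>Y. X * Y * M) ` S = S"
proof -
  have "inj_on (\<lambda>Y. X * Y * M) S"
  proof (rule inj_onI)
    fix Y Z assume Y: "Y \<in> S" and Z: "Z \<in> S" and eq: "X * Y * M = X * Z * M"
    have Yc: "Y \<in> carrier_mat d d" and Zc: "Z \<in> carrier_mat d d" using Y Z S by auto
    have r: "M * (X * W * M) * X = W" if Wc: "W \<in> carrier_mat d d" for W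
    proof -
      have "M * (X * W * M) * X = (M * X) * W * (M * X)"
        using X M Wc by (simp add: assoc_mult_mat[of _ d d _ d _ d])
      also have "\<dots> = W" unfolding MX using Wc by simp
      finally show ?thesis .
    qed
    have "Y = M * (X * Y * M) * X" using r[OF Yc] by simp
    also have "\<dots> = M * (X * Z * M) * X" using eq by simp
    also have "\<dots> = Z" using r[OF Zc] by simp
    finally show "Y = Z" .
  qed
  then have "card ((\<lambda>Y. X * Y * M) ` S) = card S" by (rule card_image)
  then show ?thesis using card_subset_eq[OF fin sub] by simp
qed

theorem lemma3p1p2:
  fixes G :: "('g, 'b) monoid_scheme" and \<rho> :: "'g \<Rightarrow> real mat" and d k :: nat
  assumes "group G" and "finite (carrier G)"
    and "irreducible_rep G d \<rho>" and "odd d"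
    and "eigenvalue_one_property G d \<rho>"
    and "odd k"
  shows "eigenvalue_one_property G (k * d) (rep_copies k \<rho>)"
proof -
  note irr = assms(3) and fin = assms(2) and oddd = assms(4) and eop = assms(5) and oddk = assms(6)
  have rep: "\<forall>g\<in>carrier G. \<rho> g \<in> carrier_mat d d" using irr unfolding irreducible_rep_def real_rep_def by auto
  have d0: "0 < d" using irr unfolding irreducible_rep_def by auto
  have k0: "0 < k" using oddk by (cases k) auto
  have kd0: "0 < k*d" using d0 k0 by simp
  have rV: "rep_copies k \<rho> g = kron k d (1\<^sub>m k) (\<rho> g)" if "g \<in> carrier G" for g
    using rep_kron[of "\<rho> g" d k] rep that unfolding rep_copies_def by auto
  show ?thesis unfolding eigenvalue_one_property_def
  proof (intro allI impI)
    fix N assume "in_normalizer G (k*d) (rep_copies k \<rho>) N \<and> finite_order_mat (k*d) N"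
    then have innorm: "in_normalizer G (k*d) (rep_copies k \<rho>) N" and fo: "finite_order_mat (k*d) N" by auto
    obtain M where N: "N \<in> carrier_mat (k*d) (k*d)" and M: "M \<in> carrier_mat (k*d) (k*d)"
      and NM: "N * M = 1\<^sub>m (k*d)" and MN: "M * N = 1\<^sub>m (k*d)"
      and img: "(\<lambda>g. N * rep_copies k \<rho> g * M) ` carrier G = rep_copies k \<rho> ` carrier G"
      using innorm unfolding in_normalizer_def by auto
    obtain m where m0: "m > 0" and Nm: "N ^\<^sub>m m = 1\<^sub>m (k*d)" using fo unfolding finite_order_mat_def by auto
    have inter: "\<exists>h\<in>carrier G. N * kron k d (1\<^sub>m k) (\<rho> g) = kron k d (1\<^sub>m k) (\<rho> h) * N" if g: "g \<in> carrier G" for g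
    proof -
      have "N * rep_copies k \<rho> g * M \<in> rep_copies k \<rho> ` carrier G" using img g by blast
      then obtain h where h: "h \<in> carrier G" "N * rep_copies k \<rho> g * M = rep_copies k \<rho> h" by auto
      let ?A = "kron k d (1\<^sub>m k) (\<rho> g)" and ?B = "kron k d (1\<^sub>m k) (\<rho> h)"
      have e: "N * ?A * M = ?B" using h rV g by simp
      have "N * ?A = N * ?A * (M * N)" using MN N by simp
      also have "\<dots> = (N * ?A * M) * N"
      proof -
        have c1: "N * ?A \<in> carrier_mat (k*d) (k*d)" using N by simp
        show ?thesis by (rule assoc_mult_mat[OF c1 M N, symmetric])
      qed
      also have "\<dots> = ?B * N" using e by simp
      finally show ?thesis using h by auto
    qed
    have blocks: "\<exists>h\<in>carrier G. \<forall>i<k. \<forall>j<k. blk d N i j * \<rho> g = \<rho> h * blk d N i j" if g: "g \<in> carrier G" for g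
    proof -
      obtain h where h: "h \<in> carrier G" "N * kron k d (1\<^sub>m k) (\<rho> g) = kron k d (1\<^sub>m k) (\<rho> h) * N"
        using inter g by blast
      have "blk d N i j * \<rho> g = \<rho> h * blk d N i j" if "i<k" "j<k" for i j
        using blk_right[OF N _ that, of "\<rho> g"] blk_left[OF N _ that, of "\<rho> h"] rep g h by auto
      then show ?thesis using h by auto
    qed
    have "\<exists>i<k. \<exists>j<k. blk d N i j \<noteq> 0\<^sub>m d d"
    proof (rule ccontr)
      assume "\<not> ?thesis"
      then have z: "blk d N i j = 0\<^sub>m d d" if "i<k" "j<k" for i j using that by auto
      have "N = 0\<^sub>m (k*d) (k*d)"
      proof (rule eq_matI)
        fix p q assume "p < dim_row (0\<^sub>m (k*d) (k*d) :: real mat)" "q < dim_col (0\<^sub>m (k*d) (k*d) :: real mat)"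
        then have p: "p < k*d" and q: "q < k*d" by auto
        have "N $$ (p,q) = blk d N (p div d) (q div d) $$ (p mod d, q mod d)"
          using mod_lt[OF p] mod_lt[OF q] by simp
        also have "\<dots> = 0" using z[OF div_lt[OF p] div_lt[OF q]] mod_lt[OF p] mod_lt[OF q] by simp
        finally show "N $$ (p,q) = 0\<^sub>m (k*d) (k*d) $$ (p,q)" using p q by simp
      qed (use N in auto)
      then have "N * M = 0\<^sub>m (k*d) (k*d)" using M by simp
      then have "(1\<^sub>m (k*d) :: real mat) $$ (0,0) = 0\<^sub>m (k*d) (k*d) $$ (0,0)" using NM by simp
      then show False using kd0 by simp
    qed
    then obtain i0 j0 where i0: "i0 < k" and j0: "j0 < k" and X0nz: "blk d N i0 j0 \<noteq> 0\<^sub>m d d" by auto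
    define X0 where "X0 = blk d N i0 j0"
    have X0c: "X0 \<in> carrier_mat d d" unfolding X0_def by simp
    have X0int: "\<forall>g\<in>carrier G. \<exists>h\<in>carrier G. X0 * \<rho> g = \<rho> h * X0"
      using blocks i0 j0 unfolding X0_def by blast
    have detX0: "det X0 \<noteq> 0"
    proof
      assume "det X0 = 0"
      then obtain v where "v \<in> carrier_vec d" "v \<noteq> 0\<^sub>v d" "X0 *\<^sub>v v = 0\<^sub>v d"
        using det_0_iff_vec_prod_zero[OF X0c] by auto
      then have "X0 = 0\<^sub>m d d" using schur_zero[OF irr X0c X0int] by auto
      then show False using X0nz X0_def by simp
    qed
    obtain M0 where M0c: "M0 \<in> carrier_mat d d" and X0M0: "X0 * M0 = 1\<^sub>m d" and M0X0: "M0 * X0 = 1\<^sub>m d"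
      using mat_inverse_exists[OF X0c detX0] by auto
    have coef: "\<exists>a. blk d N i j = a \<cdot>\<^sub>m X0" if ij: "i<k" "j<k" for i j
    proof -
      let ?X = "blk d N i j"
      have Xc: "?X \<in> carrier_mat d d" by simp
      obtain l where "eigenvalue (M0 * ?X) l" using odd_real_eigenvalue[of "M0 * ?X" d] M0c oddd by auto
      then obtain v where v: "v \<in> carrier_vec d" "v \<noteq> 0\<^sub>v d" "(M0 * ?X) *\<^sub>v v = l \<cdot>\<^sub>v v"
        unfolding eigenvalue_def eigenvector_def using M0c by auto
      define Y where "Y = ?X - l \<cdot>\<^sub>m X0"
      have Yc: "Y \<in> carrier_mat d d" unfolding Y_def using X0c by (simp add: minus_carrier_mat)
      have "?X *\<^sub>v v = (X0 * M0 * ?X) *\<^sub>v v" using X0M0 Xc by simp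
      also have "\<dots> = X0 *\<^sub>v ((M0 * ?X) *\<^sub>v v)"
      proof -
        have c: "M0 * ?X \<in> carrier_mat d d" using M0c by simp
        show ?thesis unfolding assoc_mult_mat[OF X0c M0c Xc] by (rule assoc_mult_mat_vec[OF X0c c v(1)])
      qed
      also have "\<dots> = l \<cdot>\<^sub>v (X0 *\<^sub>v v)" using v X0c by (simp add: mult_mat_vec)
      finally have Xv: "?X *\<^sub>v v = l \<cdot>\<^sub>v (X0 *\<^sub>v v)" .
      have "Y *\<^sub>v v = ?X *\<^sub>v v - (l \<cdot>\<^sub>m X0) *\<^sub>v v"
        unfolding Y_def using X0c v by (simp add: minus_mult_distrib_mat_vec[of _ d d])
      also have "\<dots> = 0\<^sub>v d" using Xv smult_mat_vec_assoc[OF X0c v(1)] X0c v by auto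
      finally have Yv: "Y *\<^sub>v v = 0\<^sub>v d" .
      have Yint: "\<forall>g\<in>carrier G. \<exists>h\<in>carrier G. Y * \<rho> g = \<rho> h * Y"
      proof
        fix g assume g: "g \<in> carrier G"
        obtain h where h: "h\<in>carrier G" "\<forall>i<k. \<forall>j<k. blk d N i j * \<rho> g = \<rho> h * blk d N i j"
          using blocks g by blast
        have hX: "?X * \<rho> g = \<rho> h * ?X" using h ij by auto
        have hX0: "X0 * \<rho> g = \<rho> h * X0" using h i0 j0 X0_def by auto
        have rg: "\<rho> g \<in> carrier_mat d d" and rh: "\<rho> h \<in> carrier_mat d d" using rep g h by auto
        have "Y * \<rho> g = ?X * \<rho> g - (l \<cdot>\<^sub>m X0) * \<rho> g"
          unfolding Y_def using X0c rg by (simp add: minus_mult_distrib_mat[of _ d d])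
        also have "\<dots> = \<rho> h * ?X - l \<cdot>\<^sub>m (X0 * \<rho> g)" using hX X0c rg by (simp add: mult_smult_assoc_mat[of _ d d])
        also have "\<dots> = \<rho> h * ?X - \<rho> h * (l \<cdot>\<^sub>m X0)" using hX0 X0c rh by (simp add: mult_smult_distrib[of _ d d])
        also have "\<dots> = \<rho> h * Y" unfolding Y_def by (rule mult_minus_distrib_mat[OF rh Xc, symmetric]) (use X0c in simp)
        finally show "\<exists>h\<in>carrier G. Y * \<rho> g = \<rho> h * Y" using h by auto
      qed
      have Y0: "Y = 0\<^sub>m d d" using schur_zero[OF irr Yc Yint v(1,2) Yv] .
      have "?X = l \<cdot>\<^sub>m X0"
      proof (rule eq_matI)
        fix r s assume "r < dim_row (l \<cdot>\<^sub>m X0)" "s < dim_col (l \<cdot>\<^sub>m X0)"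
        then have r: "r<d" "s<d" using X0c by auto
        have "Y $$ (r,s) = 0" using Y0 r by simp
        then show "?X $$ (r,s) = (l \<cdot>\<^sub>m X0) $$ (r,s)" unfolding Y_def using r X0c by simp
      qed (use X0c in auto)
      then show ?thesis by blast
    qed
    define a where "a i j = (SOME a. blk d N i j = a \<cdot>\<^sub>m X0)" for i j
    have a: "blk d N i j = a i j \<cdot>\<^sub>m X0" if "i<k" "j<k" for i j
      using someI_ex[OF coef[OF that]] unfolding a_def by blast
    define A where "A = mat k k (\<lambda>(i,j). a i j)"
    have Ac: "A \<in> carrier_mat k k" unfolding A_def by simp
    have NA: "N = kron k d A X0"
    proof (rule eq_matI)
      fix p q assume "p < dim_row (kron k d A X0)" "q < dim_col (kron k d A X0)"
      then have p: "p < k*d" and q: "q < k*d" by auto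
      have "N $$ (p,q) = blk d N (p div d) (q div d) $$ (p mod d, q mod d)"
        using mod_lt[OF p] mod_lt[OF q] by simp
      also have "\<dots> = kron k d A X0 $$ (p,q)"
        using a[OF div_lt[OF p] div_lt[OF q]] mod_lt[OF p] mod_lt[OF q] p q div_lt[OF p] div_lt[OF q] X0c
        by (simp add: A_def)
      finally show "N $$ (p,q) = kron k d A X0 $$ (p,q)" .
    qed (use N in auto)
    define P where "P = A ^\<^sub>m m"
    define Z where "Z = X0 ^\<^sub>m m"
    have Pc: "P \<in> carrier_mat k k" and Zc: "Z \<in> carrier_mat d d" using Ac X0c unfolding P_def Z_def by auto
    have KPZ: "kron k d P Z = 1\<^sub>m (k*d)" using Nm NA kron_pow[OF Ac X0c] P_def Z_def by simp
    have PZ: "P $$ (i,j) * Z $$ (r,s) = (if i = j \<and> r = s then 1 else 0)"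
      if ijrs: "i<k" "j<k" "r<d" "s<d" for i j r s
    proof -
      have l1: "i*d+r < k*d" "j*d+s < k*d" using idx_lt ijrs by auto
      have "kron k d P Z $$ (i*d+r, j*d+s) = P $$ (i,j) * Z $$ (r,s)" using l1 ijrs by simp
      moreover have "(1\<^sub>m (k*d) :: real mat) $$ (i*d+r, j*d+s) = (if i = j \<and> r = s then 1 else 0)"
      proof -
        have "(i*d+r = j*d+s) \<longleftrightarrow> (i = j \<and> r = s)" using ijrs by (metis idx_div idx_mod)
        then show ?thesis using l1 by simp
      qed
      ultimately show ?thesis using KPZ by simp
    qed
    define c0 where "c0 = P $$ (0,0)"
    have c0Z: "c0 * Z $$ (0,0) = 1" using PZ[of 0 0 0 0] k0 d0 c0_def by simp
    then have c0nz: "c0 \<noteq> 0" by auto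
    have Z00: "Z $$ (0,0) = 1/c0" using c0Z c0nz by (simp add: field_simps)
    have Zeq: "Z = (1/c0) \<cdot>\<^sub>m 1\<^sub>m d"
    proof (rule eq_matI)
      fix r s assume "r < dim_row ((1/c0) \<cdot>\<^sub>m 1\<^sub>m d :: real mat)" "s < dim_col ((1/c0) \<cdot>\<^sub>m 1\<^sub>m d :: real mat)"
      then have rs: "r < d" "s < d" by auto
      have "c0 * Z $$ (r,s) = (if r = s then 1 else 0)" using PZ[of 0 0 r s] k0 rs c0_def by simp
      then show "Z $$ (r,s) = ((1/c0) \<cdot>\<^sub>m 1\<^sub>m d) $$ (r,s)" using rs c0nz by (auto simp: field_simps)
    qed (use Zc in auto)
    have Peq: "P = c0 \<cdot>\<^sub>m 1\<^sub>m k"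
    proof (rule eq_matI)
      fix i j assume "i < dim_row (c0 \<cdot>\<^sub>m 1\<^sub>m k :: real mat)" "j < dim_col (c0 \<cdot>\<^sub>m 1\<^sub>m k :: real mat)"
      then have ij: "i < k" "j < k" by auto
      have "P $$ (i,j) * (1/c0) = (if i = j then 1 else 0)" using PZ[of i j 0 0] d0 ij Z00 by simp
      then show "P $$ (i,j) = (c0 \<cdot>\<^sub>m 1\<^sub>m k) $$ (i,j)" using ij c0nz by (auto simp: field_simps)
    qed (use Pc in auto)
    define t where "t = root m \<bar>c0\<bar>"
    have tpos: "t > 0" using c0nz m0 t_def by simp
    have tm: "t ^ m = \<bar>c0\<bar>" using m0 t_def by simp
    define A1 where "A1 = (1/t) \<cdot>\<^sub>m A"
    have A1c: "A1 \<in> carrier_mat k k" using Ac A1_def by simp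
    have A1m: "A1 ^\<^sub>m m = (c0 / \<bar>c0\<bar>) \<cdot>\<^sub>m 1\<^sub>m k"
    proof -
      have "A1 ^\<^sub>m m = (1/t)^m \<cdot>\<^sub>m P" unfolding A1_def P_def by (rule smult_pow[OF Ac])
      also have "\<dots> = (c0 / \<bar>c0\<bar>) \<cdot>\<^sub>m 1\<^sub>m k" unfolding Peq
        by (rule eq_matI) (auto simp: power_divide tm)
      finally show ?thesis .
    qed
    obtain \<mu> where "eigenvalue A1 \<mu>" using odd_real_eigenvalue[OF A1c oddk] by auto
    then obtain w where ev: "eigenvector A1 w \<mu>" unfolding eigenvalue_def by auto
    have w: "w \<in> carrier_vec k" "w \<noteq> 0\<^sub>v k" "A1 *\<^sub>v w = \<mu> \<cdot>\<^sub>v w" using ev A1c unfolding eigenvector_def by auto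
    have "(c0 / \<bar>c0\<bar>) \<cdot>\<^sub>v w = A1 ^\<^sub>m m *\<^sub>v w" unfolding A1m using smult_mat_vec_assoc[OF one_carrier_mat w(1), of "c0 / \<bar>c0\<bar>"] w(1) by simp
    also have "\<dots> = \<mu>^m \<cdot>\<^sub>v w" using eigenvector_pow[OF A1c ev] .
    finally have eqw: "(c0 / \<bar>c0\<bar>) \<cdot>\<^sub>v w = \<mu>^m \<cdot>\<^sub>v w" .
    obtain i where i: "i < k" "w $ i \<noteq> 0" using w by (metis eq_vecI index_zero_vec(1) carrier_vecD index_zero_vec(2))
    have "(c0 / \<bar>c0\<bar>) * w $ i = \<mu>^m * w $ i" using arg_cong[OF eqw, of "\<lambda>x. x $ i"] i w(1) by simp
    then have mu_m: "\<mu>^m = c0 / \<bar>c0\<bar>" using i(2) by (metis mult_cancel_right times_divide_eq_left)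
    have "\<bar>\<mu>\<bar>^m = 1^m" using mu_m c0nz by (simp add: power_abs[symmetric])
    then have "\<bar>\<mu>\<bar> = 1" using m0 power_eq_iff_eq_base[of m "\<bar>\<mu>\<bar>" 1] by simp
    then have mu2: "\<mu> * \<mu> = 1" by (metis abs_mult_self_eq mult.right_neutral abs_one)
    define X2 where "X2 = (\<mu>*t) \<cdot>\<^sub>m X0"
    define A2 where "A2 = \<mu> \<cdot>\<^sub>m A1"
    have X2c: "X2 \<in> carrier_mat d d" and A2c: "A2 \<in> carrier_mat k k" using X0c A1c X2_def A2_def by auto
    have NA2: "N = kron k d A2 X2"
    proof -
      have "kron k d A X0 = kron k d A2 X2"
      proof (rule eq_matI)
        fix p q assume "p < dim_row (kron k d A2 X2)" "q < dim_col (kron k d A2 X2)"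
        then have p: "p < k*d" and q: "q < k*d" by auto
        have "\<mu> * (A $$ (p div d, q div d) / t) * (\<mu> * t * X0 $$ (p mod d, q mod d)) = (\<mu>*\<mu>) * (t/t) * (A $$ (p div d, q div d) * X0 $$ (p mod d, q mod d))"
          by (simp add: field_simps)
        also have "\<dots> = A $$ (p div d, q div d) * X0 $$ (p mod d, q mod d)" using mu2 tpos by simp
        finally show "kron k d A X0 $$ (p,q) = kron k d A2 X2 $$ (p,q)"
          using p q div_lt[OF p] div_lt[OF q] mod_lt[OF p] mod_lt[OF q] Ac X0c
          by (simp add: X2_def A2_def A1_def)
      qed auto
      then show ?thesis using NA by simp
    qed
    have X2m: "X2 ^\<^sub>m m = 1\<^sub>m d"
    proof -
      have "X2 ^\<^sub>m m = (\<mu>*t)^m \<cdot>\<^sub>m Z" unfolding X2_def Z_def by (rule smult_pow[OF X0c])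
      also have "\<dots> = 1\<^sub>m d" unfolding Zeq
        by (rule eq_matI) (use c0nz in \<open>auto simp: power_mult_distrib mu_m tm\<close>)
      finally show ?thesis .
    qed
    have A2w: "A2 *\<^sub>v w = w"
    proof -
      have "A2 *\<^sub>v w = \<mu> \<cdot>\<^sub>v (A1 *\<^sub>v w)" unfolding A2_def by (rule smult_mat_vec_assoc[OF A1c w(1)])
      also have "\<dots> = (\<mu>*\<mu>) \<cdot>\<^sub>v w" using w by (simp add: smult_smult_assoc)
      also have "\<dots> = w" using mu2 by simp
      finally show ?thesis .
    qed
    have mt: "\<mu>*t \<noteq> 0" using mu2 tpos by auto
    define M2 where "M2 = (1/(\<mu>*t)) \<cdot>\<^sub>m M0"
    have M2c: "M2 \<in> carrier_mat d d" using M0c M2_def by simp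
    have X2M2: "X2 * M2 = 1\<^sub>m d"
      unfolding X2_def M2_def using X0c M0c mt X0M0
      apply (simp add: mult_smult_assoc_mat[of _ d d] mult_smult_distrib[of _ d d])
      apply (rule eq_matI)
      apply auto
      done
    have M2X2: "M2 * X2 = 1\<^sub>m d"
      unfolding X2_def M2_def using X0c M0c mt M0X0
      apply (simp add: mult_smult_assoc_mat[of _ d d] mult_smult_distrib[of _ d d])
      apply (rule eq_matI)
      apply auto
      done
    have conj: "X2 * \<rho> g * M2 = X0 * \<rho> g * M0" if g: "g \<in> carrier G" for g
    proof -
      have rg: "\<rho> g \<in> carrier_mat d d" using rep g by auto
      show ?thesis unfolding X2_def M2_def using X0c M0c mt rg
        apply (simp add: mult_smult_assoc_mat[of _ d d] mult_smult_distrib[of _ d d])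
        apply (rule eq_matI)
        apply auto
        done
    qed
    have img0: "(\<lambda>g. X0 * \<rho> g * M0) ` carrier G = \<rho> ` carrier G"
    proof -
      have "(\<lambda>g. X0 * \<rho> g * M0) ` carrier G = (\<lambda>Y. X0 * Y * M0) ` (\<rho> ` carrier G)" by (simp add: image_image)
      also have "\<dots> = \<rho> ` carrier G"
      proof (rule image_conj_eq[OF finite_imageI[OF fin] _ X0c M0c M0X0])
        show "\<rho> ` carrier G \<subseteq> carrier_mat d d" using rep by auto
        show "(\<lambda>Y. X0 * Y * M0) ` \<rho> ` carrier G \<subseteq> \<rho> ` carrier G"
        proof
          fix Y assume "Y \<in> (\<lambda>Y. X0 * Y * M0) ` \<rho> ` carrier G"
          then obtain g where g: "g \<in> carrier G" "Y = X0 * \<rho> g * M0" by auto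
          obtain h where h: "h \<in> carrier G" "X0 * \<rho> g = \<rho> h * X0" using X0int g by auto
          have rh: "\<rho> h \<in> carrier_mat d d" using rep h by auto
          have "Y = \<rho> h * X0 * M0" using g h by simp
          also have "\<dots> = \<rho> h" using assoc_mult_mat[OF rh X0c M0c] X0M0 rh by simp
          finally show "Y \<in> \<rho> ` carrier G" using h by auto
        qed
      qed
      finally show ?thesis .
    qed
    have innorm2: "in_normalizer G d \<rho> X2"
      unfolding in_normalizer_def
    proof (intro conjI bexI[of _ M2])
      show "(\<lambda>g. X2 * \<rho> g * M2) ` carrier G = \<rho> ` carrier G"
        using img0 conj by (metis (no_types, lifting) image_cong)
    qed (use X2c M2c X2M2 M2X2 in auto)
    have fo2: "finite_order_mat d X2" unfolding finite_order_mat_def using m0 X2m by auto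
    obtain g where g: "g \<in> carrier G" and evg: "eigenvalue (\<rho> g * X2) 1"
      using eop innorm2 fo2 unfolding eigenvalue_one_property_def by blast
    have rg: "\<rho> g \<in> carrier_mat d d" using rep g by auto
    have rgX2: "\<rho> g * X2 \<in> carrier_mat d d" using rg X2c by simp
    obtain v where v: "v \<in> carrier_vec d" "v \<noteq> 0\<^sub>v d" "(\<rho> g * X2) *\<^sub>v v = v"
      using evg rgX2 unfolding eigenvalue_def eigenvector_def by auto
    have prod: "rep_copies k \<rho> g * N = kron k d A2 (\<rho> g * X2)"
      using rV[OF g] NA2 kron_mult[of "1\<^sub>m k" k A2 "\<rho> g" d X2] A2c X2c rg by simp
    have "eigenvector (rep_copies k \<rho> g * N) (vt k d w v) 1"
      unfolding eigenvector_def prod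
      using kron_mult_vec[OF A2c rgX2 w(1) v(1)] A2w v(3) vt_nonzero[OF w(1,2) v(1,2)] by simp
    then show "\<exists>g\<in>carrier G. eigenvalue (rep_copies k \<rho> g * N) 1"
      using g unfolding eigenvalue_def by blast
  qed
qed

end
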